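(* Let $G$ be a finite-dimensional $\mathbb{F}_p$-vector space, $V\le G$ a subspace, and $\beta:G\times G\to\mathbb{F}_p^r$ a bilinear map such that $\beta|_{V\times V}$ has rank at least $s$. Fix cosets $a+V$ and $b+V$ and let $B=\{(x,y)\in(a+V)\times(b+V):\beta(x,y)=0\}$. Let $k,d$ be positive integers, let $Q\subseteq(b+V)^k$ be a set of size $\delta|V|^k$, and let $\eta>0$. Pick $x_1,\dots,x_d$ independently and uniformly at random from $a+V$. Then the probability that \[\Big|\,|Q\cap B_{x_1\cdot}^k\cap\dots\cap B_{x_d\cdot}^k|-\delta p^{-kdr}|V|^k\Big|\ge\eta|V|^k\] is at most $3\eta^{-2}p^{-s/4}$.
   Context: For $x\in a+V$, $B_{x\cdot}=\{y:(x,y)\in B\}$ is the column of $B$ indexed by $x$. A bilinear map $\gamma:V\times V\to\mathbb{F}_p^r$ has rank at least $s$ if for every nonzero $\lambda\in\mathbb{F}_p^r$ the bilinear form $\lambda\cdot\gamma$ (with $\cdot$ the standard dot product) has rank at least $s$ on $V\times V$. *)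

theory Defs
  imports "HOL-Analysis.Analysis"
begin

text \<open>Bilinear maps G x G -> F^r, with G = F^n, over a field F.\<close>
definition bilinear_map :: "('f::field^'n \<Rightarrow> 'f^'n \<Rightarrow> 'f^'r) \<Rightarrow> bool" where
  "bilinear_map \<beta> \<longleftrightarrow>
     (\<forall>x. Vector_Spaces.linear (*s) (*s) (\<lambda>y. \<beta> x y)) \<and>
     (\<forall>y. Vector_Spaces.linear (*s) (*s) (\<lambda>x. \<beta> x y))"

text \<open>Rank of a bilinear form f on V x V: dim V minus the dimension of its (left) radical in V.\<close>
definition form_rank_on :: "('f::field^'n) set \<Rightarrow> ('f^'n \<Rightarrow> 'f^'n \<Rightarrow> 'f) \<Rightarrow> nat" where
  "form_rank_on V f = vec.dim V - vec.dim {x \<in> V. \<forall>y\<in>V. f x y = 0}"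

text \<open>Standard dot product on F^r.\<close>
definition dotp :: "'f::field^'r \<Rightarrow> 'f^'r \<Rightarrow> 'f" where
  "dotp u v = (\<Sum>i\<in>UNIV. u $ i * v $ i)"

text \<open>gamma has rank at least s on V x V: every nonzero lambda gives a form of rank >= s.\<close>
definition bilinear_rank_at_least :: "('f::field^'n) set \<Rightarrow> ('f^'n \<Rightarrow> 'f^'n \<Rightarrow> 'f^'r) \<Rightarrow> nat \<Rightarrow> bool" where
  "bilinear_rank_at_least V \<gamma> s \<longleftrightarrow>
     (\<forall>l::'f^'r. l \<noteq> 0 \<longrightarrow> form_rank_on V (\<lambda>x y. dotp l (\<gamma> x y)) \<ge> s)"

definition coset :: "'a::ab_group_add \<Rightarrow> 'a set \<Rightarrow> 'a set" where
  "coset a V = {a + v | v. v \<in> V}"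

end

theory Submission
  imports Defs "HOL-Library.Function_Algebras"
begin


lemma card_fibers_hom:
  fixes \<phi> :: "'a::ab_group_add \<Rightarrow> 'b::ab_group_add"
  assumes fin: "finite U"
    and addU: "\<And>u v. u \<in> U \<Longrightarrow> v \<in> U \<Longrightarrow> u + v \<in> U"
    and diffU: "\<And>u v. u \<in> U \<Longrightarrow> v \<in> U \<Longrightarrow> u - v \<in> U"
    and hom: "\<And>u v. u \<in> U \<Longrightarrow> v \<in> U \<Longrightarrow> \<phi> (u + v) = \<phi> u + \<phi> v"
  shows "card U = card (\<phi> ` U) * card {u\<in>U. \<phi> u = 0}"
proof -
  let ?K = "{u\<in>U. \<phi> u = 0}"
  let ?F = "\<lambda>c. {u\<in>U. \<phi> u = c}"
  have hd: "\<phi> (u - v) = \<phi> u - \<phi> v" if "u \<in> U" "v \<in> U" for u v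
    using hom[of "u - v" v] diffU[OF that] that by (simp add: algebra_simps)
  have U: "U = (\<Union>c\<in>\<phi> ` U. ?F c)" by auto
  have "card U = (\<Sum>c\<in>\<phi> ` U. card (?F c))"
    by (subst U, rule card_UN_disjoint) (use fin in auto)
  also have "\<dots> = (\<Sum>c\<in>\<phi> ` U. card ?K)"
  proof (rule sum.cong[OF refl])
    fix c assume "c \<in> \<phi> ` U"
    then obtain u0 where u0: "u0 \<in> U" "\<phi> u0 = c" by auto
    have "bij_betw (\<lambda>k. k + u0) ?K (?F c)"
    proof (rule bij_betwI[where g="\<lambda>u. u - u0"])
      show "(\<lambda>k. k + u0) \<in> ?K \<rightarrow> ?F c" using u0 hom addU by auto
      show "(\<lambda>u. u - u0) \<in> ?F c \<rightarrow> ?K" using u0 hd diffU by auto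
    qed auto
    then show "card (?F c) = card ?K" by (simp add: bij_betw_same_card)
  qed
  finally show ?thesis by simp
qed

lemma card_functional:
  fixes \<phi> :: "'a::ab_group_add \<Rightarrow> 'f::{field,finite}" and sm :: "'f \<Rightarrow> 'a \<Rightarrow> 'a"
  assumes fin: "finite U"
    and addU: "\<And>u v. u \<in> U \<Longrightarrow> v \<in> U \<Longrightarrow> u + v \<in> U"
    and diffU: "\<And>u v. u \<in> U \<Longrightarrow> v \<in> U \<Longrightarrow> u - v \<in> U"
    and smU: "\<And>c u. u \<in> U \<Longrightarrow> sm c u \<in> U"
    and hom: "\<And>u v. u \<in> U \<Longrightarrow> v \<in> U \<Longrightarrow> \<phi> (u + v) = \<phi> u + \<phi> v"
    and homs: "\<And>c u. u \<in> U \<Longrightarrow> \<phi> (sm c u) = c * \<phi> u"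
    and u0: "u0 \<in> U" "\<phi> u0 \<noteq> 0"
  shows "card U = CARD('f) * card {u\<in>U. \<phi> u = 0}"
proof -
  have "\<phi> ` U = UNIV"
  proof safe
    fix c :: 'f
    have "\<phi> (sm (c / \<phi> u0) u0) = c" using homs[OF u0(1)] u0(2) by simp
    then show "c \<in> \<phi> ` U" using smU[OF u0(1)] by (metis image_eqI)
  qed auto
  then show ?thesis using card_fibers_hom[OF fin addU diffU hom] by simp
qed

lemma double_count:
  fixes g :: "'a::ab_group_add \<Rightarrow> 'b::ab_group_add \<Rightarrow> 'f::{field,finite}"
    and sa :: "'f \<Rightarrow> 'a \<Rightarrow> 'a" and sb :: "'f \<Rightarrow> 'b \<Rightarrow> 'b"
  assumes finU: "finite U"
    and addU: "\<And>u v. u \<in> U \<Longrightarrow> v \<in> U \<Longrightarrow> u + v \<in> U"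
    and diffU: "\<And>u v. u \<in> U \<Longrightarrow> v \<in> U \<Longrightarrow> u - v \<in> U"
    and smU: "\<And>c u. u \<in> U \<Longrightarrow> sa c u \<in> U"
    and finW: "finite W"
    and addW: "\<And>u v. u \<in> W \<Longrightarrow> v \<in> W \<Longrightarrow> u + v \<in> W"
    and diffW: "\<And>u v. u \<in> W \<Longrightarrow> v \<in> W \<Longrightarrow> u - v \<in> W"
    and smW: "\<And>c u. u \<in> W \<Longrightarrow> sb c u \<in> W"
    and hom1: "\<And>u v w. u \<in> U \<Longrightarrow> v \<in> U \<Longrightarrow> w \<in> W \<Longrightarrow> g (u + v) w = g u w + g v w"
    and homs1: "\<And>c u w. u \<in> U \<Longrightarrow> w \<in> W \<Longrightarrow> g (sa c u) w = c * g u w"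
    and hom2: "\<And>u v w. u \<in> U \<Longrightarrow> v \<in> W \<Longrightarrow> w \<in> W \<Longrightarrow> g u (v + w) = g u v + g u w"
    and homs2: "\<And>c u w. u \<in> U \<Longrightarrow> w \<in> W \<Longrightarrow> g u (sb c w) = c * g u w"
  shows "card U * card {w\<in>W. \<forall>u\<in>U. g u w = 0} = card W * card {u\<in>U. \<forall>w\<in>W. g u w = 0}"
proof -
  let ?p = "CARD('f)"
  have p2: "?p \<ge> 2"
  proof -
    have "{0::'f, 1} \<subseteq> UNIV" by simp
    hence "card {0::'f,1} \<le> ?p" by (intro card_mono) auto
    thus ?thesis by simp
  qed
  let ?Rw = "{w\<in>W. \<forall>u\<in>U. g u w = 0}"
  let ?Ru = "{u\<in>U. \<forall>w\<in>W. g u w = 0}"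
  have swap: "(\<Sum>w\<in>W. card {u\<in>U. g u w = 0}) = (\<Sum>u\<in>U. card {w\<in>W. g u w = 0})"
  proof -
    have "(\<Sum>w\<in>W. card {u\<in>U. g u w = 0}) = (\<Sum>w\<in>W. \<Sum>u\<in>U. if g u w = 0 then 1 else 0)"
      using finU by (simp add: sum.If_cases Int_def conj_commute)
    also have "\<dots> = (\<Sum>u\<in>U. \<Sum>w\<in>W. if g u w = 0 then 1 else 0)" by (rule sum.swap)
    also have "\<dots> = (\<Sum>u\<in>U. card {w\<in>W. g u w = 0})"
      using finW by (simp add: sum.If_cases Int_def conj_commute)
    finally show ?thesis .
  qed
  have c1: "?p * card {u\<in>U. g u w = 0} = card U + (if w \<in> ?Rw then (?p - 1) * card U else 0)"
    if w: "w \<in> W" for w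
  proof (cases "w \<in> ?Rw")
    case True
    then have "{u\<in>U. g u w = 0} = U" by auto
    then show ?thesis using True p2 by (simp add: algebra_simps)
  next
    case False
    then obtain u0 where "u0 \<in> U" "g u0 w \<noteq> 0" using w by auto
    from card_functional[where U=U and \<phi>="\<lambda>u. g u w" and sm=sa, OF finU addU diffU smU _ _ this]
    show ?thesis using False w hom1 homs1 by auto
  qed
  have c2: "?p * card {w\<in>W. g u w = 0} = card W + (if u \<in> ?Ru then (?p - 1) * card W else 0)"
    if u: "u \<in> U" for u
  proof (cases "u \<in> ?Ru")
    case True
    then have "{w\<in>W. g u w = 0} = W" by auto
    then show ?thesis using True p2 by (simp add: algebra_simps)
  next
    case False
    then obtain w0 where "w0 \<in> W" "g u w0 \<noteq> 0" using u by auto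
    from card_functional[where U=W and \<phi>="\<lambda>w. g u w" and sm=sb, OF finW addW diffW smW _ _ this]
    show ?thesis using False u hom2 homs2 by auto
  qed
  have "?p * (\<Sum>w\<in>W. card {u\<in>U. g u w = 0}) = (\<Sum>w\<in>W. card U + (if w \<in> ?Rw then (?p - 1) * card U else 0))"
    by (simp add: sum_distrib_left c1)
  also have "\<dots> = card W * card U + card ?Rw * ((?p - 1) * card U)"
    using finW by (simp add: sum.distrib sum.If_cases Int_def conj_commute)
  finally have e1: "?p * (\<Sum>w\<in>W. card {u\<in>U. g u w = 0}) = card W * card U + card ?Rw * ((?p - 1) * card U)" .
  have "?p * (\<Sum>u\<in>U. card {w\<in>W. g u w = 0}) = (\<Sum>u\<in>U. card W + (if u \<in> ?Ru then (?p - 1) * card W else 0))"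
    by (simp add: sum_distrib_left c2)
  also have "\<dots> = card U * card W + card ?Ru * ((?p - 1) * card W)"
    using finU by (simp add: sum.distrib sum.If_cases Int_def conj_commute)
  finally have e2: "?p * (\<Sum>u\<in>U. card {w\<in>W. g u w = 0}) = card U * card W + card ?Ru * ((?p - 1) * card W)" .
  from e1 e2 swap have "card W * card U + card ?Rw * ((?p - 1) * card U) = card U * card W + card ?Ru * ((?p - 1) * card W)"
    by (subst e1[symmetric], subst e2[symmetric], simp add: swap)
  then have "card U * card W + card ?Rw * ((?p - 1) * card U) = card U * card W + card ?Ru * ((?p - 1) * card W)"
    by (simp only: mult.commute[of "card W" "card U"])
  then have "card ?Rw * ((?p - 1) * card U) = card ?Ru * ((?p - 1) * card W)"
    by (rule add_left_imp_eq)
  then have eq: "(?p - 1) * (card U * card ?Rw) = (?p - 1) * (card W * card ?Ru)"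
    by (simp add: algebra_simps)
  have nz: "?p - 1 \<noteq> 0" using p2 by simp
  from eq show ?thesis unfolding mult_left_cancel[OF nz] .
qed




lemma card_subspace_vec:
  fixes S :: "('f::{field,finite}^'n) set"
  assumes "vec.subspace S"
  shows "card S = CARD('f) ^ vec.dim S"
proof -
  obtain B where B: "B \<subseteq> S" "vec.independent B" "S \<subseteq> vec.span B" "card B = vec.dim S"
    using vec.basis_exists by blast
  have fB: "finite B" by simp
  have SB: "vec.span B = S" using B assms vec.span_subspace by blast
  let ?g = "\<lambda>u. \<Sum>v\<in>B. u v *s v"
  have "bij_betw ?g (B \<rightarrow>\<^sub>E (UNIV::'f set)) (vec.span B)"
    unfolding bij_betw_def
  proof
    show "inj_on ?g (B \<rightarrow>\<^sub>E UNIV)"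
    proof (rule inj_onI)
      fix u w assume u: "u \<in> B \<rightarrow>\<^sub>E (UNIV::'f set)" and w: "w \<in> B \<rightarrow>\<^sub>E (UNIV::'f set)" and e: "?g u = ?g w"
      have s0: "(\<Sum>v\<in>B. (u v - w v) *s v) = 0"
        using e by (simp add: vec.scale_left_diff_distrib sum_subtractf)
      have "\<forall>v\<in>B. u v - w v = 0"
      proof (rule ccontr)
        assume "\<not> (\<forall>v\<in>B. u v - w v = 0)"
        then have "vec.dependent B" unfolding vec.dependent_finite[OF fB]
          using s0 by (intro exI[of _ "\<lambda>v. u v - w v"]) auto
        then show False using B(2) by simp
      qed
      then show "u = w" using u w by (intro PiE_ext) auto
    qed
    show "?g ` (B \<rightarrow>\<^sub>E UNIV) = vec.span B"
    proof
      show "?g ` (B \<rightarrow>\<^sub>E UNIV) \<subseteq> vec.span B" using vec.span_finite[OF fB] by auto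
      show "vec.span B \<subseteq> ?g ` (B \<rightarrow>\<^sub>E UNIV)"
      proof
        fix x assume "x \<in> vec.span B"
        then obtain u where x: "x = ?g u" using vec.span_finite[OF fB] by auto
        have "x = ?g (restrict u B)" unfolding x by (intro sum.cong) auto
        moreover have "restrict u B \<in> B \<rightarrow>\<^sub>E UNIV" by simp
        ultimately show "x \<in> ?g ` (B \<rightarrow>\<^sub>E UNIV)" by (rule image_eqI)
      qed
    qed
  qed
  then have "card (vec.span B) = card (B \<rightarrow>\<^sub>E (UNIV::'f set))" by (simp add: bij_betw_same_card)
  also have "\<dots> = CARD('f) ^ card B" by (simp add: card_funcsetE)
  finally show ?thesis using SB B(4) by simp
qed





lemma dotp_add2: "dotp l (u + v) = dotp l u + dotp l v"
  by (simp add: dotp_def distrib_left sum.distrib)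
lemma dotp_add1: "dotp (l + l') u = dotp l u + dotp l' u"
  by (simp add: dotp_def distrib_right sum.distrib)
lemma dotp_sc2: "dotp l (c *s u) = c * dotp l u"
  by (simp add: dotp_def sum_distrib_left algebra_simps)
lemma dotp_sc1: "dotp (c *s l) u = c * dotp l u"
  by (simp add: dotp_def sum_distrib_left algebra_simps)
lemma dotp_02[simp]: "dotp l 0 = 0" by (simp add: dotp_def)
lemma dotp_01[simp]: "dotp 0 u = 0" by (simp add: dotp_def)
lemma dotp_diff2: "dotp l (u - v) = dotp l u - dotp l v"
  by (simp add: dotp_def algebra_simps sum_subtractf)
lemma dotp_axis: "dotp (axis i 1) u = u $ i"
proof -
  have "dotp (axis i 1) u = (\<Sum>j\<in>UNIV. if j = i then u $ i else 0)"
    unfolding dotp_def by (intro sum.cong) (auto simp: axis_def)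
  also have "\<dots> = u $ i" by simp
  finally show ?thesis .
qed

lemma coset_iff: "x \<in> coset a V \<longleftrightarrow> x - a \<in> V"
  unfolding coset_def by (auto intro: exI[of _ "x - a"])

lemma card_coset: "card (coset a V) = card V"
proof -
  have "coset a V = (\<lambda>v. a + v) ` V" unfolding coset_def by auto
  then show ?thesis by (simp add: card_image inj_on_def)
qed

locale L27 =
  fixes \<beta> :: "'f::{field,finite}^'n \<Rightarrow> 'f^'n \<Rightarrow> 'f^'r" and V :: "('f^'n) set"
  assumes bil: "bilinear_map \<beta>" and sub: "vec.subspace V"
begin

lemma lin1: "Vector_Spaces.linear (*s) (*s) (\<lambda>x. \<beta> x y)" using bil unfolding bilinear_map_def by blast
lemma lin2: "Vector_Spaces.linear (*s) (*s) (\<lambda>y. \<beta> x y)" using bil unfolding bilinear_map_def by blast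

lemma b_add1: "\<beta> (x + x') y = \<beta> x y + \<beta> x' y" using vec.linear_add[OF lin1] .
lemma b_add2: "\<beta> x (y + y') = \<beta> x y + \<beta> x y'" using vec.linear_add[OF lin2] .
lemma b_sc1: "\<beta> (c *s x) y = c *s \<beta> x y" using vec.linear_scale[OF lin1] .
lemma b_sc2: "\<beta> x (c *s y) = c *s \<beta> x y" using vec.linear_scale[OF lin2] .
lemma b_diff1: "\<beta> (x - x') y = \<beta> x y - \<beta> x' y" using vec.linear_diff[OF lin1] .
lemma b_diff2: "\<beta> x (y - y') = \<beta> x y - \<beta> x y'" using vec.linear_diff[OF lin2] .
lemma b_01[simp]: "\<beta> 0 y = 0" using vec.linear_0[OF lin1] .
lemma b_02[simp]: "\<beta> x 0 = 0" using vec.linear_0[OF lin2] .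

lemma V0: "0 \<in> V" using sub vec.subspace_0 by blast
lemma Vadd: "u \<in> V \<Longrightarrow> v \<in> V \<Longrightarrow> u + v \<in> V" using sub vec.subspace_add by blast
lemma Vdiff: "u \<in> V \<Longrightarrow> v \<in> V \<Longrightarrow> u - v \<in> V" using sub vec.subspace_diff by blast
lemma Vsc: "u \<in> V \<Longrightarrow> c *s u \<in> V" using sub vec.subspace_scale by blast
lemma finV: "finite V" by simp
lemma cardV_pos: "card V > 0" using V0 finV card_gt_0_iff by blast

lemma radical_bound:
  assumes rk: "bilinear_rank_at_least V \<beta> s" and l: "l \<noteq> 0"
  shows "card {w\<in>V. \<forall>v\<in>V. dotp l (\<beta> v w) = 0} * CARD('f) ^ s \<le> card V"
proof -
  let ?g = "\<lambda>u w. dotp l (\<beta> u w)"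
  let ?L = "{u\<in>V. \<forall>w\<in>V. ?g u w = 0}"
  let ?R = "{w\<in>V. \<forall>u\<in>V. ?g u w = 0}"
  have dc: "card V * card ?R = card V * card ?L"
    by (rule double_count[where sa="(*s)" and sb="(*s)"])
       (auto simp: Vadd Vdiff Vsc b_add1 b_add2 b_sc1 b_sc2 dotp_add2 dotp_sc2)
  then have RL: "card ?R = card ?L" using cardV_pos by (simp only: mult_left_cancel[of "card V"] neq0_conv)
  have subL: "vec.subspace ?L"
    unfolding vec.subspace_def by (auto simp: V0 Vadd Vsc b_add1 b_sc1 dotp_add2 dotp_sc2)
  have "form_rank_on V (\<lambda>x y. dotp l (\<beta> x y)) \<ge> s" using rk l unfolding bilinear_rank_at_least_def by blast
  then have r: "vec.dim V - vec.dim ?L \<ge> s" unfolding form_rank_on_def .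
  have "vec.dim ?L \<le> vec.dim V" by (rule vec.dim_subset) auto
  with r have "vec.dim ?L + s \<le> vec.dim V" by simp
  then have "CARD('f) ^ (vec.dim ?L + s) \<le> CARD('f) ^ vec.dim V"
    by (intro power_increasing) auto
  then show ?thesis using RL card_subspace_vec[OF subL] card_subspace_vec[OF sub]
    by (simp add: power_add)
qed

definition Zs :: "'f^'n \<Rightarrow> nat \<Rightarrow> ('f^'n) list set" where
  "Zs b m = {zs. length zs = m \<and> set zs \<subseteq> coset b V}"

lemma card_Zs: "card (Zs b m) = card V ^ m"
proof -
  have "Zs b m = {xs. set xs \<subseteq> coset b V \<and> length xs = m}" unfolding Zs_def by auto
  then show ?thesis by (simp add: card_lists_length_eq card_coset)
qed

lemma finite_Zs: "finite (Zs b m)"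
proof -
  have "Zs b m = {xs. set xs \<subseteq> coset b V \<and> length xs = m}" unfolding Zs_def by auto
  then show ?thesis by (simp add: finite_lists_length_eq)
qed

lemma b_in_coset: "b \<in> coset b V" using V0 by (simp add: coset_iff)

lemma bad_count:
  assumes rk: "bilinear_rank_at_least V \<beta> s" and j0: "j0 < m" and l: "\<Lambda> j0 \<noteq> 0"
  shows "card {zs \<in> Zs b m. \<forall>v\<in>V. (\<Sum>j<m. dotp (\<Lambda> j) (\<beta> v (zs!j))) = 0} * CARD('f)^s \<le> card V ^ m"
proof -
  let ?T = "{zs \<in> Zs b m. \<forall>v\<in>V. (\<Sum>j<m. dotp (\<Lambda> j) (\<beta> v (zs!j))) = 0}"
  let ?Z' = "{ws\<in>Zs b m. ws!j0 = b}"
  let ?Y = "\<lambda>ws. {y\<in>coset b V. \<forall>v\<in>V. (\<Sum>j<m. dotp (\<Lambda> j) (\<beta> v ((ws[j0:=y])!j))) = 0}"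
  let ?R = "{w\<in>V. \<forall>v\<in>V. dotp (\<Lambda> j0) (\<beta> v w) = 0}"
  let ?f = "\<lambda>zs. (zs[j0:=b], zs!j0)"
  have bij: "bij_betw ?f (Zs b m) (?Z' \<times> coset b V)"
  proof (rule bij_betwI[where g="\<lambda>(ws,y). ws[j0:=y]"])
    show "?f \<in> Zs b m \<rightarrow> ?Z' \<times> coset b V"
    proof
      fix zs assume z: "zs \<in> Zs b m"
      then have "set (zs[j0:=b]) \<subseteq> coset b V"
        using set_update_subset_insert[of zs j0 b] b_in_coset unfolding Zs_def by blast
      moreover have "zs!j0 \<in> coset b V" using z j0 unfolding Zs_def by (auto dest: nth_mem)
      ultimately show "?f zs \<in> ?Z' \<times> coset b V" using z j0 unfolding Zs_def by auto
    qed
    show "(\<lambda>(ws,y). ws[j0:=y]) \<in> ?Z' \<times> coset b V \<rightarrow> Zs b m"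
    proof
      fix wy assume "wy \<in> ?Z' \<times> coset b V"
      then obtain ws y where wy: "wy = (ws,y)" "ws \<in> Zs b m" "y \<in> coset b V" by auto
      then have "set (ws[j0:=y]) \<subseteq> coset b V"
        using set_update_subset_insert[of ws j0 y] unfolding Zs_def by blast
      then show "(\<lambda>(ws,y). ws[j0:=y]) wy \<in> Zs b m" using wy unfolding Zs_def by auto
    qed
    show "(\<lambda>(ws,y). ws[j0:=y]) (?f zs) = zs" if "zs \<in> Zs b m" for zs by simp
    show "?f ((\<lambda>(ws,y). ws[j0:=y]) wy) = wy" if "wy \<in> ?Z' \<times> coset b V" for wy
      using that j0 unfolding Zs_def by auto
  qed
  have finZ': "finite ?Z'" using finite_Zs by simp
  have cZ: "card V ^ m = card ?Z' * card V"
    using bij_betw_same_card[OF bij] card_Zs[of b m] by (simp add: card_cartesian_product card_coset)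
  have Ybound: "card (?Y ws) \<le> card ?R" if ws: "ws \<in> ?Z'" for ws
  proof (cases "?Y ws = {}")
    case True show ?thesis unfolding True by simp
  next
    case False
    then obtain y0 where y0: "y0 \<in> ?Y ws" by blast
    have lw: "length ws = m" using ws unfolding Zs_def by simp
    define C where "C v = (\<Sum>j\<in>{..<m}-{j0}. dotp (\<Lambda> j) (\<beta> v (ws!j)))" for v
    have S: "(\<Sum>j<m. dotp (\<Lambda> j) (\<beta> v ((ws[j0:=y])!j))) = dotp (\<Lambda> j0) (\<beta> v y) + C v" for v y
    proof -
      have "(\<Sum>j<m. dotp (\<Lambda> j) (\<beta> v ((ws[j0:=y])!j))) =
            dotp (\<Lambda> j0) (\<beta> v ((ws[j0:=y])!j0)) + (\<Sum>j\<in>{..<m}-{j0}. dotp (\<Lambda> j) (\<beta> v ((ws[j0:=y])!j)))"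
        using j0 by (intro sum.remove) auto
      also have "\<dots> = dotp (\<Lambda> j0) (\<beta> v y) + C v"
        unfolding C_def using lw j0 by (auto intro!: sum.cong)
      finally show ?thesis .
    qed
    have "inj_on (\<lambda>y. y - y0) (?Y ws)" by (rule inj_onI) simp
    moreover have "(\<lambda>y. y - y0) ` (?Y ws) \<subseteq> ?R"
    proof
      fix w assume "w \<in> (\<lambda>y. y - y0) ` (?Y ws)"
      then obtain y where y: "y \<in> ?Y ws" and w: "w = y - y0" by blast
      have "w = (y - b) - (y0 - b)" using w by simp
      moreover have "y - b \<in> V" "y0 - b \<in> V" using y y0 by (auto simp: coset_iff)
      ultimately have wV: "w \<in> V" using Vdiff by metis
      have "dotp (\<Lambda> j0) (\<beta> v w) = 0" if v: "v \<in> V" for v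
      proof -
        have "dotp (\<Lambda> j0) (\<beta> v y) + C v = 0" using y v S by simp
        moreover have "dotp (\<Lambda> j0) (\<beta> v y0) + C v = 0" using y0 v S by simp
        ultimately show ?thesis unfolding w b_diff2 dotp_diff2 by (simp add: eq_neg_iff_add_eq_0[symmetric])
      qed
      then show "w \<in> ?R" using wV by simp
    qed
    ultimately show ?thesis by (intro card_inj_on_le) auto
  qed
  have "inj_on ?f ?T" using bij unfolding bij_betw_def inj_on_def by auto
  then have "card ?T = card (?f ` ?T)" by (simp add: card_image)
  also have "\<dots> \<le> card (SIGMA ws:?Z'. ?Y ws)"
  proof (rule card_mono)
    show "finite (SIGMA ws:?Z'. ?Y ws)" using finZ' by (intro finite_SigmaI) auto
    show "?f ` ?T \<subseteq> (SIGMA ws:?Z'. ?Y ws)"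
    proof
      fix p assume "p \<in> ?f ` ?T"
      then obtain zs where zs: "zs \<in> ?T" "p = ?f zs" by blast
      have "?f zs \<in> ?Z' \<times> coset b V" using bij zs unfolding bij_betw_def by auto
      moreover have "(zs[j0:=b])[j0 := zs!j0] = zs" by simp
      ultimately show "p \<in> (SIGMA ws:?Z'. ?Y ws)" using zs by auto
    qed
  qed
  also have "\<dots> = (\<Sum>ws\<in>?Z'. card (?Y ws))" using finZ' by (intro card_SigmaI) auto
  also have "\<dots> \<le> (\<Sum>ws\<in>?Z'. card ?R)" by (intro sum_mono Ybound)
  also have "\<dots> = card ?Z' * card ?R" by simp
  finally have "card ?T \<le> card ?Z' * card ?R" .
  then have "card ?T * CARD('f)^s \<le> card ?Z' * (card ?R * CARD('f)^s)" by (simp add: mult.assoc)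
  also have "\<dots> \<le> card ?Z' * card V" using radical_bound[OF rk l] by simp
  finally show ?thesis using cZ by simp
qed

end



definition Um :: "nat \<Rightarrow> (nat \<Rightarrow> 'f::field^'r) set" where "Um m = {\<Lambda>. \<forall>j\<ge>m. \<Lambda> j = 0}"
definition pr :: "nat \<Rightarrow> (nat \<Rightarrow> 'f::field^'r) \<Rightarrow> (nat \<Rightarrow> 'f^'r) \<Rightarrow> 'f" where
  "pr m \<Lambda> w = (\<Sum>j<m. dotp (\<Lambda> j) (w j))"

lemma Um_bij: "bij_betw (\<lambda>\<Lambda>. restrict \<Lambda> {..<m}) (Um m) (PiE {..<m} (\<lambda>_. UNIV))"
proof (rule bij_betwI[where g="\<lambda>f j. if j < m then f j else 0"])
  show "(\<lambda>\<Lambda>. restrict \<Lambda> {..<m}) \<in> Um m \<rightarrow> PiE {..<m} (\<lambda>_. UNIV)" by auto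
  show "(\<lambda>f j. if j < m then f j else 0) \<in> PiE {..<m} (\<lambda>_. UNIV) \<rightarrow> Um m" by (auto simp: Um_def)
  show "(\<lambda>j. if j < m then restrict \<Lambda> {..<m} j else 0) = \<Lambda>" if "\<Lambda> \<in> Um m" for \<Lambda> :: "nat \<Rightarrow> 'a^'b"
    using that by (auto simp: Um_def fun_eq_iff)
  show "restrict (\<lambda>j. if j < m then f j else 0) {..<m} = f" if "f \<in> PiE {..<m} (\<lambda>_. UNIV :: ('a^'b) set)" for f
    using that by (auto simp: fun_eq_iff PiE_def extensional_def)
qed

lemma card_Um: "card (Um m :: (nat \<Rightarrow> 'f::{field,finite}^'r) set) = CARD('f) ^ (CARD('r) * m)"
proof -
  have "card (Um m :: (nat \<Rightarrow> 'f^'r) set) = card (PiE {..<m} (\<lambda>_. UNIV :: ('f^'r) set))"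
    by (rule bij_betw_same_card[OF Um_bij])
  also have "\<dots> = CARD('f^'r) ^ m" by (simp add: card_PiE)
  finally show ?thesis by (simp add: power_mult)
qed

lemma finite_Um: "finite (Um m :: (nat \<Rightarrow> 'f::{field,finite}^'r) set)"
  using bij_betw_finite[OF Um_bij[where 'a='f and 'b='r and m=m]] by (simp add: finite_PiE)

lemma zero_Um: "0 \<in> Um m" by (simp add: Um_def)

context L27 begin

definition Lz :: "('f^'n) list \<Rightarrow> 'f^'n \<Rightarrow> nat \<Rightarrow> 'f^'r" where
  "Lz zs v = (\<lambda>j. if j < length zs then \<beta> v (zs!j) else 0)"
definition Perp :: "('f^'n) list \<Rightarrow> (nat \<Rightarrow> 'f^'r) set" where
  "Perp zs = {\<Lambda>\<in>Um (length zs). \<forall>v\<in>V. pr (length zs) \<Lambda> (Lz zs v) = 0}"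
definition Aset :: "'f^'n \<Rightarrow> ('f^'n) list \<Rightarrow> ('f^'n) set" where
  "Aset a zs = {x\<in>coset a V. \<forall>z\<in>set zs. \<beta> x z = 0}"
definition Kset :: "('f^'n) list \<Rightarrow> ('f^'n) set" where
  "Kset zs = {v\<in>V. Lz zs v = 0}"

lemma Lz_add: "Lz zs (u + v) = Lz zs u + Lz zs v" by (auto simp: Lz_def fun_eq_iff b_add1)
lemma Lz_diff: "Lz zs (u - v) = Lz zs u - Lz zs v" by (auto simp: Lz_def fun_eq_iff b_diff1)
lemma Lz_sc: "Lz zs (c *s v) = (\<lambda>j. c *s Lz zs v j)" by (auto simp: Lz_def fun_eq_iff b_sc1)
lemma Lz_0: "Lz zs 0 = 0" by (auto simp: Lz_def fun_eq_iff)
lemma Lz_zero_iff: "Lz zs v = 0 \<longleftrightarrow> (\<forall>z\<in>set zs. \<beta> v z = 0)"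
  by (auto simp: Lz_def fun_eq_iff all_set_conv_all_nth)

lemma pr_add1: "pr m (\<Lambda> + \<Lambda>') w = pr m \<Lambda> w + pr m \<Lambda>' w"
  by (simp add: pr_def dotp_add1 sum.distrib)
lemma pr_add2: "pr m \<Lambda> (w + w') = pr m \<Lambda> w + pr m \<Lambda> w'"
  by (simp add: pr_def dotp_add2 sum.distrib)
lemma pr_sc1: "pr m (\<lambda>j. c *s \<Lambda> j) w = c * pr m \<Lambda> w"
  by (simp add: pr_def dotp_sc1 sum_distrib_left)
lemma pr_sc2: "pr m \<Lambda> (\<lambda>j. c *s w j) = c * pr m \<Lambda> w"
  by (simp add: pr_def dotp_sc2 sum_distrib_left)

lemma duality: "card (Um (length zs) :: (nat \<Rightarrow> 'f^'r) set) = card (Lz zs ` V) * card (Perp zs)"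
proof -
  let ?m = "length zs"
  let ?W = "Lz zs ` V"
  let ?sm = "\<lambda>c (\<Lambda>::nat \<Rightarrow> 'f^'r) j. c *s \<Lambda> j"
  have WUm: "?W \<subseteq> Um ?m" by (auto simp: Um_def Lz_def)
  have dc: "card (Um ?m :: (nat \<Rightarrow> 'f^'r) set) * card {w\<in>?W. \<forall>u\<in>Um ?m. pr ?m u w = 0} = card ?W * card {u\<in>Um ?m. \<forall>w\<in>?W. pr ?m u w = 0}"
  proof (rule double_count[where sa = ?sm and sb = ?sm])
    show "finite (Um ?m :: (nat \<Rightarrow> 'f^'r) set)" by (rule finite_Um)
    show "finite ?W" by simp
    show "u + v \<in> ?W" if uv: "u \<in> ?W" "v \<in> ?W" for u v
    proof -
      obtain x y where "x \<in> V" "y \<in> V" "u = Lz zs x" "v = Lz zs y" using uv by blast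
      then have "u + v = Lz zs (x + y)" "x + y \<in> V" by (simp_all add: Lz_add Vadd)
      then show ?thesis by blast
    qed
    show "u - v \<in> ?W" if uv: "u \<in> ?W" "v \<in> ?W" for u v
    proof -
      obtain x y where "x \<in> V" "y \<in> V" "u = Lz zs x" "v = Lz zs y" using uv by blast
      then have "u - v = Lz zs (x - y)" "x - y \<in> V" by (simp_all add: Lz_diff Vdiff)
      then show ?thesis by blast
    qed
    show "?sm c u \<in> ?W" if uv: "u \<in> ?W" for c u
    proof -
      obtain x where "x \<in> V" "u = Lz zs x" using uv by blast
      then have "?sm c u = Lz zs (c *s x)" "c *s x \<in> V" by (simp_all add: Lz_sc Vsc)
      then show ?thesis by blast
    qed
  qed (simp_all add: Um_def pr_add1 pr_add2 pr_sc1 pr_sc2)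
  have e1: "{w\<in>?W. \<forall>u\<in>Um ?m. pr ?m u w = 0} = {0}"
  proof
    show "{0} \<subseteq> {w\<in>?W. \<forall>u\<in>Um ?m. pr ?m u w = 0}"
      using V0 Lz_0 by (auto simp: pr_def intro!: image_eqI[where x=0])
    show "{w\<in>?W. \<forall>u\<in>Um ?m. pr ?m u w = 0} \<subseteq> {0}"
    proof
      fix w assume w: "w \<in> {w\<in>?W. \<forall>u\<in>Um ?m. pr ?m u w = 0}"
      have "w j = 0" for j
      proof (cases "j < ?m")
        case False
        have "w \<in> Um ?m" using w WUm by blast
        then show ?thesis using False by (simp add: Um_def)
      next
        case True
        show ?thesis
        proof (subst vec_eq_iff, intro allI)
          fix i
          let ?L = "\<lambda>j'. if j' = j then axis i 1 else (0::'f^'r)"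
          have "?L \<in> Um ?m" using True by (auto simp: Um_def)
          moreover have "\<forall>u\<in>Um ?m. pr ?m u w = 0" using w by blast
          ultimately have "pr ?m ?L w = 0" by blast
          moreover have "pr ?m ?L w = (\<Sum>j'<?m. if j' = j then w j $ i else 0)"
            unfolding pr_def by (intro sum.cong) (auto simp: dotp_axis)
          moreover have "(\<Sum>j'<?m. if j' = j then w j $ i else 0) = w j $ i" using True by simp
          ultimately show "w j $ i = 0 $ i" by simp
        qed
      qed
      then show "w \<in> {0}" by (auto simp: fun_eq_iff)
    qed
  qed
  have e2: "{u\<in>Um ?m. \<forall>w\<in>?W. pr ?m u w = 0} = Perp zs" unfolding Perp_def by auto
  show ?thesis using dc unfolding e1 e2 by (simp only: card_insert_if finite.emptyI card.empty, simp)
qed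

lemma rank_nullity: "card V = card (Lz zs ` V) * card (Kset zs)"
  unfolding Kset_def by (rule card_fibers_hom) (auto simp: Vadd Vdiff Lz_add)

lemma A_card: assumes x0: "x0 \<in> Aset a zs" shows "card (Aset a zs) = card (Kset zs)"
proof -
  have x0c: "x0 - a \<in> V" and x0z: "\<forall>z\<in>set zs. \<beta> x0 z = 0" using x0 by (auto simp: Aset_def coset_iff)
  have "bij_betw (\<lambda>v. x0 + v) (Kset zs) (Aset a zs)"
  proof (rule bij_betwI[where g="\<lambda>x. x - x0"])
    show "(\<lambda>v. x0 + v) \<in> Kset zs \<rightarrow> Aset a zs"
    proof
      fix v assume v: "v \<in> Kset zs"
      have e: "x0 + v - a = (x0 - a) + v" by simp
      have "v \<in> V" using v by (simp add: Kset_def)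
      then have "x0 + v - a \<in> V" using x0c Vadd e by metis
      then show "x0 + v \<in> Aset a zs" using v x0z by (auto simp: Aset_def coset_iff Kset_def Lz_zero_iff b_add1)
    qed
    show "(\<lambda>x. x - x0) \<in> Aset a zs \<rightarrow> Kset zs"
    proof
      fix x assume x: "x \<in> Aset a zs"
      have "x - x0 = (x - a) - (x0 - a)" by simp
      moreover have "x - a \<in> V" using x by (simp add: Aset_def coset_iff)
      ultimately have "x - x0 \<in> V" using x0c Vdiff by metis
      then show "x - x0 \<in> Kset zs" using x x0z by (auto simp: Aset_def Kset_def Lz_zero_iff b_diff1)
    qed
  qed auto
  then show ?thesis by (rule bij_betw_same_card[symmetric])
qed

lemma finite_Perp: "finite (Perp zs)"
  using finite_Um by (rule finite_subset[rotated]) (auto simp: Perp_def)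

lemma zero_Perp: "0 \<in> Perp zs" by (simp add: Perp_def zero_Um pr_def)

lemma key1: assumes "Aset a zs \<noteq> {}"
  shows "card (Aset a zs) * CARD('f) ^ (CARD('r) * length zs) = card V * card (Perp zs)"
proof -
  obtain x0 where "x0 \<in> Aset a zs" using assms by blast
  then have c1: "card (Aset a zs) = card (Kset zs)" by (rule A_card)
  have c2: "card (Um (length zs) :: (nat \<Rightarrow> 'f^'r) set) = CARD('f) ^ (CARD('r) * length zs)" by (rule card_Um)
  show ?thesis unfolding c1 c2[symmetric] duality rank_nullity[of zs] by (simp only: ac_simps)
qed

lemma key2: assumes "Aset a zs = {}" shows "card (Perp zs) \<ge> 2"
proof (rule ccontr)
  assume "\<not> card (Perp zs) \<ge> 2"
  moreover have "card (Perp zs) \<noteq> 0" using finite_Perp zero_Perp by auto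
  ultimately have c1: "card (Perp zs) = 1" by simp
  let ?m = "length zs"
  have cc: "card (Lz zs ` V) = card (Um ?m :: (nat \<Rightarrow> 'f^'r) set)" using duality[of zs] c1 by simp
  have WUm: "Lz zs ` V \<subseteq> Um ?m" by (auto simp: Um_def Lz_def)
  have WU: "Lz zs ` V = Um ?m" by (rule card_subset_eq[OF finite_Um WUm cc])
  let ?w = "\<lambda>j. if j < ?m then - \<beta> a (zs!j) else 0"
  have "?w \<in> Um ?m" by (simp add: Um_def)
  then have "?w \<in> Lz zs ` V" unfolding WU .
  then obtain v where v1: "?w = Lz zs v" and v2: "v \<in> V" by (rule imageE)
  have v: "v \<in> V" "Lz zs v = ?w" using v1 v2 by simp_all
  have "a + v \<in> Aset a zs"
  proof -
    have "a + v \<in> coset a V" using v by (simp add: coset_iff)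
    moreover have "\<beta> (a + v) z = 0" if "z \<in> set zs" for z
    proof -
      obtain j where j: "j < ?m" "z = zs!j" using \<open>z \<in> set zs\<close> by (auto simp: in_set_conv_nth)
      have "\<beta> v (zs!j) = - \<beta> a (zs!j)" using fun_cong[OF v(2), of j] j by (simp add: Lz_def)
      then show ?thesis using j by (simp add: b_add1)
    qed
    ultimately show ?thesis by (simp add: Aset_def)
  qed
  then show False using assms by blast
qed

end



context L27 begin

lemma e_bound:
  assumes d: "d > 0"
  shows "\<bar>real (card (Aset a zs)) ^ d * real CARD('f) ^ (CARD('r) * length zs * d) - real (card V) ^ d\<bar>
         \<le> real (card V) ^ d * (real (card (Perp zs)) ^ d - 1)"
proof (cases "Aset a zs = {}")
  case True
  have "card (Perp zs) \<ge> 2" using key2[OF True] .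
  then have "real (card (Perp zs)) ^ d \<ge> 2 ^ d" by (intro power_mono) auto
  moreover have "(2::real) ^ 1 \<le> 2 ^ d" using d by (intro power_increasing) auto
  then have "(2::real) ^ d \<ge> 2" by simp
  ultimately have "real (card (Perp zs)) ^ d - 1 \<ge> 1" by linarith
  then have "real (card V) ^ d * 1 \<le> real (card V) ^ d * (real (card (Perp zs)) ^ d - 1)"
    by (intro mult_left_mono) auto
  moreover have z: "real (card (Aset a zs)) ^ d = 0" using True d by simp
  ultimately show ?thesis unfolding z by simp
next
  case False
  have k: "real (card (Aset a zs)) * real CARD('f) ^ (CARD('r) * length zs) = real (card V) * real (card (Perp zs))"
    using key1[OF False] by (metis of_nat_mult of_nat_power)
  have "real (card (Aset a zs)) ^ d * real CARD('f) ^ (CARD('r) * length zs * d)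
      = (real (card (Aset a zs)) * real CARD('f) ^ (CARD('r) * length zs)) ^ d"
    by (simp add: power_mult_distrib power_mult)
  also have "\<dots> = real (card V) ^ d * real (card (Perp zs)) ^ d" unfolding k by (simp add: power_mult_distrib)
  finally have e: "real (card (Aset a zs)) ^ d * real CARD('f) ^ (CARD('r) * length zs * d) = real (card V) ^ d * real (card (Perp zs)) ^ d" .
  have "card (Perp zs) \<ge> 1" using finite_Perp zero_Perp by (metis One_nat_def Suc_leI card_gt_0_iff empty_iff)
  then have "real (card (Perp zs)) ^ d \<ge> 1" by simp
  then have "real (card V) ^ d * 1 \<le> real (card V) ^ d * real (card (Perp zs)) ^ d" by (intro mult_left_mono) auto
  then have nn: "0 \<le> real (card V) ^ d * real (card (Perp zs)) ^ d - real (card V) ^ d" by simp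
  show ?thesis unfolding e abs_of_nonneg[OF nn] by (simp add: right_diff_distrib)
qed

lemma sum_perp:
  assumes rk: "bilinear_rank_at_least V \<beta> s"
  shows "(\<Sum>zs\<in>Zs b m. (card (Perp zs) ^ d - 1)) * CARD('f) ^ s \<le> CARD('f) ^ (CARD('r) * m * d) * card V ^ m"
proof -
  let ?UL = "{Ls. set Ls \<subseteq> (Um m :: (nat \<Rightarrow> 'f^'r) set) \<and> length Ls = d}"
  let ?D = "?UL - {replicate d 0}"
  have finUL: "finite ?UL" using finite_Um by (rule finite_lists_length_eq)
  have finD: "finite ?D" using finUL by simp
  have step1: "card (Perp zs) ^ d - 1 = card {Ls\<in>?D. set Ls \<subseteq> Perp zs}" if zs: "zs \<in> Zs b m" for zs
  proof -
    have lz: "length zs = m" using zs by (simp add: Zs_def)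
    let ?P = "{Ls. set Ls \<subseteq> Perp zs \<and> length Ls = d}"
    have cP: "card ?P = card (Perp zs) ^ d" by (rule card_lists_length_eq[OF finite_Perp])
    have rep: "replicate d 0 \<in> ?P" using zero_Perp by auto
    have PU: "Perp zs \<subseteq> Um m" using lz by (auto simp: Perp_def)
    have "{Ls\<in>?D. set Ls \<subseteq> Perp zs} = ?P - {replicate d 0}" using PU by auto
    then show ?thesis using card_Diff_singleton[OF rep] cP by simp
  qed
  have "(\<Sum>zs\<in>Zs b m. (card (Perp zs) ^ d - 1)) = (\<Sum>zs\<in>Zs b m. card {Ls\<in>?D. set Ls \<subseteq> Perp zs})"
    by (intro sum.cong refl step1)
  also have "\<dots> = (\<Sum>zs\<in>Zs b m. \<Sum>Ls\<in>?D. if set Ls \<subseteq> Perp zs then 1 else 0)"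
    using finD by (simp add: sum.If_cases Int_def conj_commute)
  also have "\<dots> = (\<Sum>Ls\<in>?D. \<Sum>zs\<in>Zs b m. if set Ls \<subseteq> Perp zs then 1 else 0)" by (rule sum.swap)
  also have "\<dots> = (\<Sum>Ls\<in>?D. card {zs\<in>Zs b m. set Ls \<subseteq> Perp zs})"
    using finite_Zs by (simp add: sum.If_cases Int_def conj_commute)
  finally have S: "(\<Sum>zs\<in>Zs b m. (card (Perp zs) ^ d - 1)) = (\<Sum>Ls\<in>?D. card {zs\<in>Zs b m. set Ls \<subseteq> Perp zs})" .
  have each: "card {zs\<in>Zs b m. set Ls \<subseteq> Perp zs} * CARD('f) ^ s \<le> card V ^ m" if Ls: "Ls \<in> ?D" for Ls
  proof -
    have "\<exists>\<Lambda>\<in>set Ls. \<Lambda> \<noteq> 0"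
    proof (rule ccontr)
      assume "\<not> (\<exists>\<Lambda>\<in>set Ls. \<Lambda> \<noteq> 0)"
      then have "Ls = replicate d 0" using Ls by (intro replicate_eqI) auto
      then show False using Ls by simp
    qed
    then obtain \<Lambda> where L: "\<Lambda> \<in> set Ls" "\<Lambda> \<noteq> 0" by blast
    have LU: "\<Lambda> \<in> Um m" using Ls L by auto
    obtain j0 where j0: "\<Lambda> j0 \<noteq> 0" using L(2) by (auto simp: fun_eq_iff)
    have j0m: "j0 < m" using LU j0 by (auto simp: Um_def) (meson not_le)
    have sub: "{zs\<in>Zs b m. set Ls \<subseteq> Perp zs} \<subseteq> {zs \<in> Zs b m. \<forall>v\<in>V. (\<Sum>j<m. dotp (\<Lambda> j) (\<beta> v (zs!j))) = 0}"
    proof safe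
      fix zs v assume zs: "zs \<in> Zs b m" and sl: "set Ls \<subseteq> Perp zs" and v: "v \<in> V"
      have lz: "length zs = m" using zs by (simp add: Zs_def)
      have "\<Lambda> \<in> Perp zs" using sl L by blast
      then have "pr m \<Lambda> (Lz zs v) = 0" using v lz by (simp add: Perp_def)
      moreover have "pr m \<Lambda> (Lz zs v) = (\<Sum>j<m. dotp (\<Lambda> j) (\<beta> v (zs!j)))"
        unfolding pr_def Lz_def using lz by (intro sum.cong) auto
      ultimately show "(\<Sum>j<m. dotp (\<Lambda> j) (\<beta> v (zs!j))) = 0" by simp
    qed
    have "card {zs\<in>Zs b m. set Ls \<subseteq> Perp zs} \<le> card {zs \<in> Zs b m. \<forall>v\<in>V. (\<Sum>j<m. dotp (\<Lambda> j) (\<beta> v (zs!j))) = 0}"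
      by (rule card_mono[OF _ sub]) (simp add: finite_Zs)
    then have "card {zs\<in>Zs b m. set Ls \<subseteq> Perp zs} * CARD('f) ^ s \<le> card {zs \<in> Zs b m. \<forall>v\<in>V. (\<Sum>j<m. dotp (\<Lambda> j) (\<beta> v (zs!j))) = 0} * CARD('f) ^ s"
      by (rule mult_right_mono) simp
    also have "\<dots> \<le> card V ^ m" by (rule bad_count[where \<Lambda>=\<Lambda> and b=b, OF rk j0m j0])
    finally show ?thesis .
  qed
  have "(\<Sum>zs\<in>Zs b m. (card (Perp zs) ^ d - 1)) * CARD('f) ^ s = (\<Sum>Ls\<in>?D. card {zs\<in>Zs b m. set Ls \<subseteq> Perp zs} * CARD('f) ^ s)"
    unfolding S by (simp add: sum_distrib_right)
  also have "\<dots> \<le> (\<Sum>Ls\<in>?D. card V ^ m)" by (intro sum_mono each)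
  also have "\<dots> = card ?D * card V ^ m" by simp
  also have "\<dots> \<le> card ?UL * card V ^ m" using finUL by (intro mult_right_mono card_mono) auto
  also have "card ?UL = card (Um m :: (nat \<Rightarrow> 'f^'r) set) ^ d" by (rule card_lists_length_eq[OF finite_Um])
  also have "\<dots> = CARD('f) ^ (CARD('r) * m * d)" by (simp add: card_Um power_mult)
  finally show ?thesis .
qed

end



context L27 begin

lemma finite_Xs: "finite {xs. length xs = d \<and> set xs \<subseteq> coset a V}"
proof -
  have "{xs. length xs = d \<and> set xs \<subseteq> coset a V} = {xs. set xs \<subseteq> coset a V \<and> length xs = d}" by auto
  then show ?thesis by (simp add: finite_lists_length_eq)
qed

lemma card_Xs: "card {xs. length xs = d \<and> set xs \<subseteq> coset a V} = card V ^ d"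
proof -
  have "{xs. length xs = d \<and> set xs \<subseteq> coset a V} = {xs. set xs \<subseteq> coset a V \<and> length xs = d}" by auto
  then show ?thesis by (simp add: card_lists_length_eq card_coset)
qed

lemma count_gen:
  assumes finI: "finite I"
  shows "(\<Sum>xs\<in>{xs. length xs = d \<and> set xs \<subseteq> coset a V}. real (card {i\<in>I. \<forall>x\<in>set xs. \<forall>y\<in>set (f i). \<beta> x y = 0}))
       = (\<Sum>i\<in>I. real (card (Aset a (f i))) ^ d)"
proof -
  let ?X = "{xs. length xs = d \<and> set xs \<subseteq> coset a V}"
  let ?K = "\<lambda>xs i. \<forall>x\<in>set xs. \<forall>y\<in>set (f i). \<beta> x y = 0"
  have "(\<Sum>xs\<in>?X. real (card {i\<in>I. ?K xs i})) = (\<Sum>xs\<in>?X. \<Sum>i\<in>I. if ?K xs i then 1 else 0)"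
    using finI by (simp add: sum.If_cases Int_def conj_commute)
  also have "\<dots> = (\<Sum>i\<in>I. \<Sum>xs\<in>?X. if ?K xs i then 1 else 0)" by (rule sum.swap)
  also have "\<dots> = (\<Sum>i\<in>I. real (card {xs\<in>?X. ?K xs i}))"
    using finite_Xs by (simp add: sum.If_cases Int_def conj_commute)
  also have "\<dots> = (\<Sum>i\<in>I. real (card (Aset a (f i))) ^ d)"
  proof (rule sum.cong[OF refl])
    fix i
    have "{xs\<in>?X. ?K xs i} = {xs. set xs \<subseteq> Aset a (f i) \<and> length xs = d}"
      by (auto simp: Aset_def)
    then show "real (card {xs\<in>?X. ?K xs i}) = real (card (Aset a (f i))) ^ d"
      by (simp add: card_lists_length_eq)
  qed
  finally show ?thesis .
qed

lemma sum_E: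
  assumes rk: "bilinear_rank_at_least V \<beta> s" and d: "d > 0"
  shows "(\<Sum>zs\<in>Zs b m. \<bar>real (card (Aset a zs)) ^ d * real CARD('f) ^ (CARD('r) * length zs * d) - real (card V) ^ d\<bar>) * real CARD('f) ^ s
         \<le> real (card V) ^ d * real CARD('f) ^ (CARD('r) * m * d) * real (card V) ^ m"
proof -
  have ge1: "card (Perp zs) ^ d \<ge> 1" for zs
  proof -
    have "card (Perp zs) \<ge> 1" using finite_Perp zero_Perp by (metis One_nat_def Suc_leI card_gt_0_iff empty_iff)
    then show ?thesis by simp
  qed
  have ge1r: "real (card (Perp zs) ^ d - 1) = real (card (Perp zs)) ^ d - 1" for zs
    using ge1[of zs] by (metis of_nat_1 of_nat_diff of_nat_power)
  have "(\<Sum>zs\<in>Zs b m. \<bar>real (card (Aset a zs)) ^ d * real CARD('f) ^ (CARD('r) * length zs * d) - real (card V) ^ d\<bar>)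
      \<le> (\<Sum>zs\<in>Zs b m. real (card V) ^ d * (real (card (Perp zs)) ^ d - 1))"
    by (intro sum_mono e_bound d)
  also have "\<dots> = real (card V) ^ d * real (\<Sum>zs\<in>Zs b m. (card (Perp zs) ^ d - 1))"
    unfolding of_nat_sum sum_distrib_left ge1r by simp
  finally have s1: "(\<Sum>zs\<in>Zs b m. \<bar>real (card (Aset a zs)) ^ d * real CARD('f) ^ (CARD('r) * length zs * d) - real (card V) ^ d\<bar>)
      \<le> real (card V) ^ d * real (\<Sum>zs\<in>Zs b m. (card (Perp zs) ^ d - 1))" .
  have s2: "real (\<Sum>zs\<in>Zs b m. (card (Perp zs) ^ d - 1)) * real CARD('f) ^ s \<le> real CARD('f) ^ (CARD('r) * m * d) * real (card V) ^ m"
  proof -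
    have "real ((\<Sum>zs\<in>Zs b m. (card (Perp zs) ^ d - 1)) * CARD('f) ^ s) \<le> real (CARD('f) ^ (CARD('r) * m * d) * card V ^ m)"
      using sum_perp[OF rk, where b=b and m=m and d=d] by (simp only: of_nat_le_iff)
    then show ?thesis by (simp only: of_nat_mult of_nat_power)
  qed
  have "(\<Sum>zs\<in>Zs b m. \<bar>real (card (Aset a zs)) ^ d * real CARD('f) ^ (CARD('r) * length zs * d) - real (card V) ^ d\<bar>) * real CARD('f) ^ s
      \<le> real (card V) ^ d * real (\<Sum>zs\<in>Zs b m. (card (Perp zs) ^ d - 1)) * real CARD('f) ^ s"
    using s1 by (intro mult_right_mono) auto
  also have "\<dots> \<le> real (card V) ^ d * (real CARD('f) ^ (CARD('r) * m * d) * real (card V) ^ m)"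
    unfolding mult.assoc by (intro mult_left_mono s2[unfolded mult.assoc]) auto
  finally show ?thesis by (simp add: mult.assoc)
qed

end



context L27 begin

lemma final:
  assumes rk: "bilinear_rank_at_least V \<beta> s"
    and k: "k > 0" and d: "d > 0"
    and Qs: "Q \<subseteq> {ys. length ys = k \<and> set ys \<subseteq> coset b V}"
    and cQ: "real (card Q) = \<delta> * real (card V) ^ k"
    and eta: "\<eta> > 0"
  shows "real (card {xs. length xs = d \<and> set xs \<subseteq> coset a V \<and>
            \<bar>real (card {ys \<in> Q. \<forall>x\<in>set xs. \<forall>y\<in>set ys. \<beta> x y = 0})
              - \<delta> * real (CARD('f)) powr (- real (k * d * CARD('r))) * real (card V) ^ k\<bar>
            \<ge> \<eta> * real (card V) ^ k})
         / real (card V) ^ d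
       \<le> 3 * \<eta> powr (-2) * real (CARD('f)) powr (- real s / 4)"
proof -
  let ?X = "{xs. length xs = d \<and> set xs \<subseteq> coset a V}"
  define c where "c xs = real (card {ys \<in> Q. \<forall>x\<in>set xs. \<forall>y\<in>set ys. \<beta> x y = 0})" for xs
  define N where "N = real (card V)"
  define p where "p = real CARD('f)"
  define P1 where "P1 = p ^ (CARD('r) * k * d)"
  define \<mu> where "\<mu> = \<delta> * p powr (- real (k * d * CARD('r))) * N ^ k"
  define E where "E zs = real (card (Aset a zs)) ^ d * p ^ (CARD('r) * length zs * d) - N ^ d" for zs
  define ps where "ps = p ^ s"
  define E1 where "E1 = (\<Sum>ys\<in>Q. E ys)"
  define E2 where "E2 = (\<Sum>pq\<in>Q\<times>Q. E (fst pq @ snd pq))"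
  define q where "q = real (card Q)"
  have Npos: "N > 0" unfolding N_def using cardV_pos by simp
  have p2: "p \<ge> 2"
  proof -
    have "{0::'f, 1} \<subseteq> UNIV" by simp
    hence "card {0::'f,1} \<le> CARD('f)" by (intro card_mono) auto
    thus ?thesis unfolding p_def by simp
  qed
  have P1ge: "P1 \<ge> 1" unfolding P1_def using p2 by simp
  have pspos: "ps > 0" unfolding ps_def using p2 by simp
  have QZ: "Q \<subseteq> Zs b k" using Qs by (auto simp: Zs_def)
  have finQ: "finite Q" using finite_Zs QZ by (rule finite_subset[rotated])
  have qle: "q \<le> N ^ k"
  proof -
    have "card Q \<le> card (Zs b k)" by (rule card_mono[OF finite_Zs QZ])
    then show ?thesis unfolding q_def N_def card_Zs by (metis of_nat_le_iff of_nat_power)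
  qed
  have q0: "q \<ge> 0" unfolding q_def by simp
  have hmu: "\<mu> = q / P1"
  proof -
    have h: "p powr (- real (k * d * CARD('r))) = inverse (p ^ (k * d * CARD('r)))"
    proof -
      have "p powr real (k * d * CARD('r)) = p ^ (k * d * CARD('r))" by (rule powr_realpow) (use p2 in linarith)
      then show ?thesis by (simp only: powr_minus)
    qed
    have e: "k * d * CARD('r) = CARD('r) * k * d" by simp
    have "p ^ (k * d * CARD('r)) = P1" unfolding P1_def e ..
    then have "p powr (- real (k * d * CARD('r))) = 1 / P1" unfolding h by (simp add: divide_inverse)
    then show ?thesis unfolding \<mu>_def q_def cQ N_def by simp
  qed
  have P12: "p ^ (CARD('r) * (k + k) * d) = P1 ^ 2"
  proof -
    have e: "CARD('r) * (k + k) * d = CARD('r) * k * d * 2" by (simp add: algebra_simps)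
    show ?thesis unfolding P1_def e by (rule power_mult)
  qed
  have AQ: "real (card (Aset a ys)) ^ d = (N ^ d + E ys) / P1" if "ys \<in> Q" for ys
  proof -
    have "length ys = k" using that Qs by auto
    then have "E ys = real (card (Aset a ys)) ^ d * P1 - N ^ d" unfolding E_def P1_def by simp
    then show ?thesis using P1ge by (simp add: field_simps)
  qed
  have A2: "real (card (Aset a (fst pq @ snd pq))) ^ d = (N ^ d + E (fst pq @ snd pq)) / P1 ^ 2" if "pq \<in> Q \<times> Q" for pq
  proof -
    have "length (fst pq @ snd pq) = k + k" using that by (auto dest!: subsetD[OF Qs])
    moreover note P12
    ultimately have "E (fst pq @ snd pq) = real (card (Aset a (fst pq @ snd pq))) ^ d * P1 ^ 2 - N ^ d"
      unfolding E_def by simp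
    then show ?thesis using P1ge by (simp add: field_simps)
  qed
  have S1: "(\<Sum>xs\<in>?X. c xs) = (q * N ^ d + E1) / P1"
  proof -
    have "(\<Sum>xs\<in>?X. c xs) = (\<Sum>ys\<in>Q. real (card (Aset a ys)) ^ d)"
      unfolding c_def using count_gen[OF finQ, where f="\<lambda>ys. ys" and a=a and d=d] by simp
    also have "\<dots> = (\<Sum>ys\<in>Q. (N ^ d + E ys) / P1)" by (intro sum.cong refl AQ)
    also have "\<dots> = (q * N ^ d + E1) / P1"
      unfolding E1_def q_def by (simp add: sum_divide_distrib[symmetric] sum.distrib)
    finally show ?thesis .
  qed
  have S2: "(\<Sum>xs\<in>?X. (c xs) ^ 2) = (q ^ 2 * N ^ d + E2) / P1 ^ 2"
  proof -
    have csq: "(c xs) ^ 2 = real (card {pq\<in>Q\<times>Q. \<forall>x\<in>set xs. \<forall>y\<in>set (fst pq @ snd pq). \<beta> x y = 0})" for xs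
    proof -
      let ?S = "{ys \<in> Q. \<forall>x\<in>set xs. \<forall>y\<in>set ys. \<beta> x y = 0}"
      have "{pq\<in>Q\<times>Q. \<forall>x\<in>set xs. \<forall>y\<in>set (fst pq @ snd pq). \<beta> x y = 0} = ?S \<times> ?S" by auto
      then show ?thesis unfolding c_def by (simp add: card_cartesian_product power2_eq_square)
    qed
    have "(\<Sum>xs\<in>?X. (c xs) ^ 2) = (\<Sum>pq\<in>Q\<times>Q. real (card (Aset a (fst pq @ snd pq))) ^ d)"
      unfolding csq using count_gen[where I="Q\<times>Q" and f="\<lambda>pq. fst pq @ snd pq" and a=a and d=d] finQ by simp
    also have "\<dots> = (\<Sum>pq\<in>Q\<times>Q. (N ^ d + E (fst pq @ snd pq)) / P1 ^ 2)" by (intro sum.cong refl A2)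
    also have "\<dots> = (q ^ 2 * N ^ d + E2) / P1 ^ 2"
      unfolding E2_def q_def by (simp add: sum_divide_distrib[symmetric] sum.distrib card_cartesian_product power2_eq_square)
    finally show ?thesis .
  qed
  have cX: "real (card ?X) = N ^ d" unfolding N_def card_Xs by simp
  have var: "(\<Sum>xs\<in>?X. (c xs - \<mu>) ^ 2) = (E2 - 2 * q * E1) / P1 ^ 2"
  proof -
    have "(\<Sum>xs\<in>?X. (c xs - \<mu>) ^ 2) = (\<Sum>xs\<in>?X. (c xs) ^ 2) - 2 * \<mu> * (\<Sum>xs\<in>?X. c xs) + real (card ?X) * \<mu> ^ 2"
      by (simp add: power2_diff sum.distrib sum_subtractf sum_distrib_left mult_ac)
    also have "\<dots> = (E2 - 2 * q * E1) / P1 ^ 2"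
      unfolding S1 S2 cX hmu using P1ge by (simp add: field_simps power2_eq_square)
    finally show ?thesis .
  qed
  have B1: "\<bar>E1\<bar> * ps \<le> N ^ d * P1 * N ^ k"
  proof -
    have "\<bar>E1\<bar> \<le> (\<Sum>ys\<in>Q. \<bar>E ys\<bar>)" unfolding E1_def by (rule sum_abs)
    also have "\<dots> \<le> (\<Sum>zs\<in>Zs b k. \<bar>E zs\<bar>)" by (rule sum_mono2[OF finite_Zs QZ]) auto
    finally have "\<bar>E1\<bar> * ps \<le> (\<Sum>zs\<in>Zs b k. \<bar>E zs\<bar>) * ps" using pspos by (intro mult_right_mono) auto
    also have "\<dots> \<le> N ^ d * P1 * N ^ k"
      using sum_E[OF rk d, where b=b and m=k and a=a] unfolding E_def N_def p_def ps_def P1_def .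
    finally show ?thesis .
  qed
  have B2: "\<bar>E2\<bar> * ps \<le> N ^ d * P1 ^ 2 * N ^ (k + k)"
  proof -
    let ?app = "\<lambda>pq. fst pq @ snd pq"
    have inj: "inj_on ?app (Q \<times> Q)"
    proof (rule inj_onI)
      fix u w assume u: "u \<in> Q \<times> Q" and w: "w \<in> Q \<times> Q" and e: "?app u = ?app w"
      have "length (fst u) = length (fst w)" using u w by (auto dest!: subsetD[OF Qs])
      then show "u = w" using e by (simp add: prod_eq_iff)
    qed
    have sub: "?app ` (Q \<times> Q) \<subseteq> Zs b (k + k)" by (auto simp: Zs_def dest!: subsetD[OF Qs])
    have "\<bar>E2\<bar> \<le> (\<Sum>pq\<in>Q\<times>Q. \<bar>E (?app pq)\<bar>)" unfolding E2_def by (rule sum_abs)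
    also have "\<dots> = (\<Sum>zs\<in>?app ` (Q \<times> Q). \<bar>E zs\<bar>)" by (simp add: sum.reindex[OF inj])
    also have "\<dots> \<le> (\<Sum>zs\<in>Zs b (k + k). \<bar>E zs\<bar>)" by (rule sum_mono2[OF finite_Zs sub]) auto
    finally have "\<bar>E2\<bar> * ps \<le> (\<Sum>zs\<in>Zs b (k + k). \<bar>E zs\<bar>) * ps" using pspos by (intro mult_right_mono) auto
    also have "\<dots> \<le> N ^ d * p ^ (CARD('r) * (k + k) * d) * N ^ (k + k)"
      using sum_E[OF rk d, where b=b and m="k+k" and a=a] unfolding E_def N_def p_def ps_def .
    also note P12
    finally show ?thesis .
  qed
  have varb: "(\<Sum>xs\<in>?X. (c xs - \<mu>) ^ 2) * ps \<le> 3 * N ^ d * N ^ (k + k)"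
  proof -
    have "(E2 - 2 * q * E1) * ps \<le> \<bar>E2\<bar> * ps + 2 * q * (\<bar>E1\<bar> * ps)"
    proof -
      have a1: "(2 * q) * (- E1) \<le> (2 * q) * \<bar>E1\<bar>"
        by (rule mult_left_mono[OF abs_ge_minus_self]) (use q0 in simp)
      have a2: "E2 \<le> \<bar>E2\<bar>" by (rule abs_ge_self)
      have "E2 - 2 * q * E1 \<le> \<bar>E2\<bar> + 2 * q * \<bar>E1\<bar>" using a1 a2 by (simp add: algebra_simps)
      then have "(E2 - 2 * q * E1) * ps \<le> (\<bar>E2\<bar> + 2 * q * \<bar>E1\<bar>) * ps"
        by (rule mult_right_mono) (use pspos in simp)
      then show ?thesis by (simp add: distrib_right mult.assoc)
    qed
    also have "\<dots> \<le> N ^ d * P1 ^ 2 * N ^ (k + k) + 2 * N ^ k * (N ^ d * P1 * N ^ k)"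
    proof (rule add_mono[OF B2])
      have f1: "2 * q \<le> 2 * N ^ k" using qle by simp
      have f2: "0 \<le> \<bar>E1\<bar> * ps" using pspos by simp
      have f3: "0 \<le> 2 * N ^ k" using Npos by simp
      show "2 * q * (\<bar>E1\<bar> * ps) \<le> 2 * N ^ k * (N ^ d * P1 * N ^ k)"
        by (rule mult_mono[OF f1 B1 f3 f2])
    qed
    also have "\<dots> \<le> N ^ d * P1 ^ 2 * N ^ (k + k) + 2 * (N ^ d * P1 ^ 2 * N ^ (k + k))"
    proof -
      have "P1 \<le> P1 ^ 2" using P1ge by (simp add: power2_eq_square)
      then have "N ^ d * P1 * N ^ (k + k) \<le> N ^ d * P1 ^ 2 * N ^ (k + k)" using Npos
        by (intro mult_right_mono mult_left_mono) auto
      then show ?thesis by (simp add: power_add algebra_simps)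
    qed
    also have "\<dots> = 3 * N ^ d * N ^ (k + k) * P1 ^ 2" by (simp add: algebra_simps)
    finally have "(E2 - 2 * q * E1) * ps \<le> 3 * N ^ d * N ^ (k + k) * P1 ^ 2" .
    then show ?thesis unfolding var using P1ge by (simp add: field_simps)
  qed
  let ?B = "{xs. length xs = d \<and> set xs \<subseteq> coset a V \<and> \<bar>c xs - \<mu>\<bar> \<ge> \<eta> * N ^ k}"
  have BX: "?B \<subseteq> ?X" by auto
  have mark: "real (card ?B) * (\<eta> * N ^ k) ^ 2 \<le> (\<Sum>xs\<in>?X. (c xs - \<mu>) ^ 2)"
  proof -
    have "real (card ?B) * (\<eta> * N ^ k) ^ 2 = (\<Sum>xs\<in>?B. (\<eta> * N ^ k) ^ 2)" by simp
    also have "\<dots> \<le> (\<Sum>xs\<in>?B. (c xs - \<mu>) ^ 2)"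
    proof (rule sum_mono)
      fix xs assume "xs \<in> ?B"
      then have "\<eta> * N ^ k \<le> \<bar>c xs - \<mu>\<bar>" by simp
      moreover have "0 \<le> \<eta> * N ^ k" using eta Npos by simp
      ultimately have "(\<eta> * N ^ k) ^ 2 \<le> \<bar>c xs - \<mu>\<bar> ^ 2" by (rule power_mono)
      then show "(\<eta> * N ^ k) ^ 2 \<le> (c xs - \<mu>) ^ 2" by simp
    qed
    also have "\<dots> \<le> (\<Sum>xs\<in>?X. (c xs - \<mu>) ^ 2)" by (rule sum_mono2[OF finite_Xs BX]) auto
    finally show ?thesis .
  qed
  have cB: "real (card ?B) * \<eta> ^ 2 * ps \<le> 3 * N ^ d"
  proof -
    have "real (card ?B) * (\<eta> * N ^ k) ^ 2 * ps \<le> 3 * N ^ d * N ^ (k + k)"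
      using mult_right_mono[OF mark, of ps] pspos varb by linarith
    then have "(real (card ?B) * \<eta> ^ 2 * ps) * N ^ (k + k) \<le> (3 * N ^ d) * N ^ (k + k)"
      by (simp add: power_mult_distrib power_add power2_eq_square algebra_simps)
    then show ?thesis using Npos by (simp add: mult_le_cancel_right)
  qed
  have goalB: "real (card ?B) / N ^ d \<le> 3 / (\<eta> ^ 2 * ps)"
    using cB Npos eta pspos by (simp add: field_simps)
  have r1: "\<eta> powr (-2) = 1 / \<eta> ^ 2" using eta by (simp add: powr_minus divide_inverse)
  have r2: "1 / ps \<le> p powr (- real s / 4)"
  proof -
    have "1 / ps = p powr (- real s)" unfolding ps_def using p2 by (simp add: powr_minus powr_realpow divide_inverse)
    also have "\<dots> \<le> p powr (- real s / 4)" using p2 by (intro powr_mono) auto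
    finally show ?thesis .
  qed
  have "3 / (\<eta> ^ 2 * ps) = 3 * (1 / \<eta> ^ 2) * (1 / ps)" by simp
  also have "\<dots> \<le> 3 * (1 / \<eta> ^ 2) * p powr (- real s / 4)" using r2 eta by (intro mult_left_mono) auto
  finally have fin: "real (card ?B) / N ^ d \<le> 3 * \<eta> powr (-2) * p powr (- real s / 4)" using goalB r1 by simp
  show ?thesis using fin unfolding c_def \<mu>_def N_def p_def .
qed

end

theorem lemma2p7:
  fixes \<beta> :: "'f::{field,finite}^'n \<Rightarrow> 'f^'n \<Rightarrow> 'f^'r"
    and V :: "('f^'n) set" and a b :: "'f^'n"
    and Q :: "('f^'n) list set"
    and k d s :: nat and \<delta> \<eta> :: real
  assumes "prime (CARD('f))"
    and "vec.subspace V"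
    and "bilinear_map \<beta>"
    and "bilinear_rank_at_least V \<beta> s"
    and "k > 0" and "d > 0"
    and "Q \<subseteq> {ys. length ys = k \<and> set ys \<subseteq> coset b V}"
    and "real (card Q) = \<delta> * real (card V) ^ k"
    and "\<eta> > 0"
  shows "real (card {xs. length xs = d \<and> set xs \<subseteq> coset a V \<and>
            \<bar>real (card {ys \<in> Q. \<forall>x\<in>set xs. \<forall>y\<in>set ys. \<beta> x y = 0})
              - \<delta> * real (CARD('f)) powr (- real (k * d * CARD('r))) * real (card V) ^ k\<bar>
            \<ge> \<eta> * real (card V) ^ k})
         / real (card V) ^ d
       \<le> 3 * \<eta> powr (-2) * real (CARD('f)) powr (- real s / 4)"
proof -
  interpret L27 \<beta> V using assms(3) assms(2) by unfold_locales
  show ?thesis by (rule final[OF assms(4) assms(5) assms(6) assms(7) assms(8) assms(9)])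
qed

end
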